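(* Let $\mathcal{L}\in\mathscr{C}^\infty(\oplus^k\mathrm{T}Q\times\mathbb{R}^k)$ be a regular Lagrangian, fix an index $i$, and suppose that on a natural coordinate domain $\partial\mathcal{L}/\partial q^i=0$. Then $Y=\partial/\partial q^i$ satisfies $\mathscr{L}_Y\eta^\alpha_{\mathcal{L}}=0$ for all $\alpha$ and $\mathscr{L}_YE_{\mathcal{L}}=0$, and for every $k$-vector field $\mathbf{X}=(X_\alpha)$ solving the $k$-contact Lagrangian equations, $$\sum_\alpha\mathscr{L}_{X_\alpha}\Big(\frac{\partial\mathcal{L}}{\partial v^i_\alpha}\Big)=-\sum_\alpha(\mathscr{L}_{(\mathcal{R}_{\mathcal{L}})_\alpha}E_{\mathcal{L}})\frac{\partial\mathcal{L}}{\partial v^i_\alpha}=\sum_\alpha\frac{\partial\mathcal{L}}{\partial s^\alpha}\frac{\partial\mathcal{L}}{\partial v^i_\alpha}.$$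
   Context: Natural coordinates on $\oplus^k\mathrm{T}Q\times\mathbb{R}^k$ are $(q^i,v^i_\alpha,s^\alpha)$. $\mathcal{L}$ is regular if the matrix $\big(\partial^2\mathcal{L}/\partial v^i_\alpha\partial v^j_\beta\big)$ is everywhere invertible. The Lagrangian energy is $E_{\mathcal{L}}=v^i_\alpha\,\partial\mathcal{L}/\partial v^i_\alpha-\mathcal{L}$ and the contact forms are $\eta^\alpha_{\mathcal{L}}=\mathrm{d}s^\alpha-\frac{\partial\mathcal{L}}{\partial v^i_\alpha}\mathrm{d}q^i$; for regular $\mathcal{L}$ these define a $k$-contact structure, whose Reeb vector fields $(\mathcal{R}_{\mathcal{L}})_\alpha$ are the unique vector fields with $i((\mathcal{R}_{\mathcal{L}})_\alpha)\eta^\beta_{\mathcal{L}}=\delta^\beta_\alpha$, $i((\mathcal{R}_{\mathcal{L}})_\alpha)\mathrm{d}\eta^\beta_{\mathcal{L}}=0$. The $k$-contact Lagrangian equations for $\mathbf{X}=(X_1,\dots,X_k)$ are $\sum_\alpha i(X_\alpha)\mathrm{d}\eta^\alpha_{\mathcal{L}}=\mathrm{d}E_{\mathcal{L}}-\sum_\alpha(\mathscr{L}_{(\mathcal{R}_{\mathcal{L}})_\alpha}E_{\mathcal{L}})\eta^\alpha_{\mathcal{L}}$ and $\sum_\alpha i(X_\alpha)\eta^\alpha_{\mathcal{L}}=-E_{\mathcal{L}}$. *)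

theory Defs
  imports "HOL-Analysis.Analysis"
begin

text \<open>Natural coordinates on a coordinate domain of the bundle of k-velocities times R^k.
  A point is a triple (q, v, s) with q :: real^'n (the q^i), v :: real^'n^'k
  (v $ alpha $ i = v^i_alpha), s :: real^'k (the s^alpha).  Tangent vectors at a point
  are elements of the same vector space (components along d/dq^i, d/dv^i_alpha, d/ds^alpha).\<close>

type_synonym ('n, 'k) pt = "(real^'n) \<times> ((real^'n)^'k) \<times> (real^'k)"

definition qc :: "('n::finite, 'k::finite) pt \<Rightarrow> real^'n" where "qc x = fst x"
definition vc :: "('n::finite, 'k::finite) pt \<Rightarrow> (real^'n)^'k" where "vc x = fst (snd x)"
definition sc :: "('n::finite, 'k::finite) pt \<Rightarrow> real^'k" where "sc x = snd (snd x)"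

text \<open>Coordinate vector fields d/dq^i, d/dv^i_alpha, d/ds^alpha (constant in coordinates).\<close>
definition eq :: "'n \<Rightarrow> ('n::finite, 'k::finite) pt" where
  "eq i = (axis i 1, 0, 0)"
definition ev :: "'n \<Rightarrow> 'k \<Rightarrow> ('n::finite, 'k::finite) pt" where
  "ev i a = (0, axis a (axis i 1), 0)"
definition es :: "'k \<Rightarrow> ('n::finite, 'k::finite) pt" where
  "es a = (0, 0, axis a 1)"

definition dd :: "('a::real_normed_vector \<Rightarrow> 'b::real_normed_vector) \<Rightarrow> 'a \<Rightarrow> 'a \<Rightarrow> 'b" where
  "dd f x u = frechet_derivative f (at x) u"

fun Ck_on :: "nat \<Rightarrow> 'a::euclidean_space set \<Rightarrow> ('a \<Rightarrow> real) \<Rightarrow> bool" where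
  "Ck_on 0 U f = continuous_on U f"
| "Ck_on (Suc m) U f = (f differentiable_on U \<and> (\<forall>u. Ck_on m U (\<lambda>x. dd f x u)))"

definition Cinf_on :: "'a::euclidean_space set \<Rightarrow> ('a \<Rightarrow> real) \<Rightarrow> bool" where
  "Cinf_on U f = (\<forall>m. Ck_on m U f)"

definition Lq :: "(('n::finite, 'k::finite) pt \<Rightarrow> real) \<Rightarrow> 'n \<Rightarrow> ('n, 'k) pt \<Rightarrow> real" where
  "Lq L i x = dd L x (eq i)"
definition Lv :: "(('n::finite, 'k::finite) pt \<Rightarrow> real) \<Rightarrow> 'n \<Rightarrow> 'k \<Rightarrow> ('n, 'k) pt \<Rightarrow> real" where
  "Lv L i a x = dd L x (ev i a)"
definition Ls :: "(('n::finite, 'k::finite) pt \<Rightarrow> real) \<Rightarrow> 'k \<Rightarrow> ('n, 'k) pt \<Rightarrow> real" where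
  "Ls L a x = dd L x (es a)"

definition regular_on :: "('n::finite, 'k::finite) pt set \<Rightarrow> (('n, 'k) pt \<Rightarrow> real) \<Rightarrow> bool" where
  "regular_on U L = (\<forall>x\<in>U. invertible
      ((\<chi> a b. dd (Lv L (fst b) (snd b)) x (ev (fst a) (snd a))) :: real^('n \<times> 'k)^('n \<times> 'k)))"

definition energy :: "(('n::finite, 'k::finite) pt \<Rightarrow> real) \<Rightarrow> ('n, 'k) pt \<Rightarrow> real" where
  "energy L x = (\<Sum>a\<in>UNIV. \<Sum>i\<in>UNIV. (vc x $ a $ i) * Lv L i a x) - L x"

text \<open>Contact forms eta^alpha_L = ds^alpha - dL/dv^i_alpha dq^i, as (point, tangent vector) \<mapsto> value.\<close>
definition eta :: "(('n::finite, 'k::finite) pt \<Rightarrow> real) \<Rightarrow> 'k \<Rightarrow> ('n, 'k) pt \<Rightarrow> ('n, 'k) pt \<Rightarrow> real" where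
  "eta L a x w = sc w $ a - (\<Sum>i\<in>UNIV. Lv L i a x * (qc w $ i))"

text \<open>Exterior derivative of a 1-form theta (coordinate formula): 
  (d theta)_x(u,w) = D(theta(.)(w))_x(u) - D(theta(.)(u))_x(w).  Contraction i(u) d theta = d theta(u, -).\<close>
definition dform :: "('a::real_normed_vector \<Rightarrow> 'a \<Rightarrow> real) \<Rightarrow> 'a \<Rightarrow> 'a \<Rightarrow> 'a \<Rightarrow> real" where
  "dform \<theta> x u w = dd (\<lambda>y. \<theta> y w) x u - dd (\<lambda>y. \<theta> y u) x w"

definition lie_fun :: "('a::real_normed_vector \<Rightarrow> real) \<Rightarrow> ('a \<Rightarrow> 'a) \<Rightarrow> 'a \<Rightarrow> real" where
  "lie_fun f X x = dd f x (X x)"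

definition lie_form :: "('a::real_normed_vector \<Rightarrow> 'a \<Rightarrow> real) \<Rightarrow> ('a \<Rightarrow> 'a) \<Rightarrow> 'a \<Rightarrow> 'a \<Rightarrow> real" where
  "lie_form \<theta> Y x w = dd (\<lambda>y. \<theta> y w) x (Y x) + \<theta> x (dd Y x w)"

definition reeb :: "(('n::finite, 'k::finite) pt \<Rightarrow> real) \<Rightarrow> 'k \<Rightarrow> ('n, 'k) pt \<Rightarrow> ('n, 'k) pt" where
  "reeb L a x = (THE r. \<forall>b. eta L b x r = (if a = b then 1 else 0)
                         \<and> (\<forall>w. dform (eta L b) x r w = 0))"

definition solves_kcontact :: "('n::finite, 'k::finite) pt set \<Rightarrow> (('n, 'k) pt \<Rightarrow> real)
    \<Rightarrow> ('k \<Rightarrow> ('n, 'k) pt \<Rightarrow> ('n, 'k) pt) \<Rightarrow> bool" where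
  "solves_kcontact U L X = (\<forall>x\<in>U.
      (\<forall>w. (\<Sum>a\<in>UNIV. dform (eta L a) x (X a x) w)
           = dd (energy L) x w - (\<Sum>a\<in>UNIV. lie_fun (energy L) (reeb L a) x * eta L a x w))
    \<and> (\<Sum>a\<in>UNIV. eta L a x (X a x)) = - energy L x)"

end

theory Submission
  imports Defs
begin


lemma dd_eq: "(f has_derivative f') (at x) \<Longrightarrow> dd f x = f'"
  unfolding dd_def by (rule frechet_derivative_at[symmetric])

lemma dd_has: "f differentiable at x \<Longrightarrow> (f has_derivative dd f x) (at x)"
  unfolding dd_def using frechet_derivative_works by blast

lemma dd_const: "dd (\<lambda>_. c) x = (\<lambda>_. 0)"
  by (rule dd_eq) simp

lemma axis_nth': "axis i c $ j = (if j = i then c else 0)"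
  by (simp add: axis_def)

lemma comps[simp]:
  "qc (eq i) = axis i 1" "vc (eq i) = 0" "sc (eq i) = 0"
  "qc (ev i a) = 0" "vc (ev i a) = axis a (axis i 1)" "sc (ev i a) = 0"
  "qc (es a) = 0" "vc (es a) = 0" "sc (es a) = axis a 1"
  "qc (0::('n::finite,'k::finite) pt) = 0" "vc (0::('n::finite,'k::finite) pt) = 0" "sc (0::('n::finite,'k::finite) pt) = 0"
  "qc (w + w') = qc w + qc w'" "vc (w + w') = vc w + vc w'" "sc (w + w') = sc w + sc w'"
  "qc (c *\<^sub>R w) = c *\<^sub>R qc w" "vc (c *\<^sub>R w) = c *\<^sub>R vc w" "sc (c *\<^sub>R w) = c *\<^sub>R sc w"
  by (auto simp: qc_def vc_def sc_def eq_def ev_def es_def zero_prod_def)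

lemma comps_sum[simp]:
  "qc (sum f A) = (\<Sum>x\<in>A. qc (f x))" "vc (sum f A) = (\<Sum>x\<in>A. vc (f x))" "sc (sum f A) = (\<Sum>x\<in>A. sc (f x))"
  by (auto simp: qc_def vc_def sc_def fst_sum snd_sum)

lemma dsum: "(\<Sum>x\<in>(UNIV::'a::finite set). \<Sum>y\<in>(UNIV::'b::finite set). if i = x then if j = y then f x y else 0 else 0) = (f i j :: real)"
proof -
  have "\<And>x. (\<Sum>y\<in>(UNIV::'b set). if i = x then if j = y then f x y else 0 else 0) = (if i = x then f x j else 0)"
    by (cases "i = x") (simp_all add: sum.delta)
  then show ?thesis by (simp add: sum.delta)
qed

lemma decomp: "(w::('n::finite,'k::finite) pt) = (\<Sum>j\<in>UNIV. (qc w $ j) *\<^sub>R eq j)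
   + (\<Sum>c\<in>UNIV. \<Sum>j\<in>UNIV. (vc w $ c $ j) *\<^sub>R ev j c) + (\<Sum>c\<in>UNIV. (sc w $ c) *\<^sub>R es c)"
proof -
  have "qc w = qc ((\<Sum>j\<in>UNIV. (qc w $ j) *\<^sub>R eq j)
   + (\<Sum>c\<in>UNIV. \<Sum>j\<in>UNIV. (vc w $ c $ j) *\<^sub>R ev j c) + (\<Sum>c\<in>UNIV. (sc w $ c) *\<^sub>R es c))"
    by (simp add: vec_eq_iff sum_component axis_nth' if_distrib sum.delta cong: if_cong)
  moreover have "vc w = vc ((\<Sum>j\<in>UNIV. (qc w $ j) *\<^sub>R eq j)
   + (\<Sum>c\<in>UNIV. \<Sum>j\<in>UNIV. (vc w $ c $ j) *\<^sub>R ev j c) + (\<Sum>c\<in>UNIV. (sc w $ c) *\<^sub>R es c))"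
    by (simp add: vec_eq_iff sum_component axis_def if_distrib[of "\<lambda>v. v $ _"] if_distrib[of "\<lambda>v. _ * v"] sum.delta sum.delta' dsum cong: if_cong)
  moreover have "sc w = sc ((\<Sum>j\<in>UNIV. (qc w $ j) *\<^sub>R eq j)
   + (\<Sum>c\<in>UNIV. \<Sum>j\<in>UNIV. (vc w $ c $ j) *\<^sub>R ev j c) + (\<Sum>c\<in>UNIV. (sc w $ c) *\<^sub>R es c))"
    by (simp add: vec_eq_iff sum_component axis_nth' if_distrib sum.delta cong: if_cong)
  ultimately show ?thesis by (simp add: qc_def vc_def sc_def prod_eq_iff)
qed

lemma lin_decomp:
  assumes "linear (D :: ('n::finite,'k::finite) pt \<Rightarrow> real)"
  shows "D w = (\<Sum>j\<in>UNIV. qc w $ j * D (eq j))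
   + (\<Sum>c\<in>UNIV. \<Sum>j\<in>UNIV. vc w $ c $ j * D (ev j c)) + (\<Sum>c\<in>UNIV. sc w $ c * D (es c))"
  apply (subst decomp[of w])
  using assms by (simp add: linear_add linear_sum linear_scale)



lemma C2:
  assumes "open U" "Cinf_on U L" "x \<in> U"
  shows "L differentiable at x" "(\<lambda>y. dd L y u) differentiable at x"
proof -
  have "Ck_on (Suc (Suc 0)) U L" using assms(2) unfolding Cinf_on_def by blast
  then show "L differentiable at x" "(\<lambda>y. dd L y u) differentiable at x"
    using assms(1,3) by (auto simp: differentiable_on_eq_differentiable_at)
qed

lemma line_deriv:
  assumes "(G has_derivative G') (at (z + t *\<^sub>R e))"
  shows "((\<lambda>s. G (z + s *\<^sub>R e)) has_derivative (\<lambda>h. h * G' e)) (at t)"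
proof -
  have a: "((\<lambda>s. z + s *\<^sub>R e) has_derivative (\<lambda>h. h *\<^sub>R e)) (at t)"
    by (auto intro!: derivative_eq_intros)
  have "(G \<circ> (\<lambda>s. z + s *\<^sub>R e) has_derivative G' \<circ> (\<lambda>h. h *\<^sub>R e)) (at t)"
    by (rule diff_chain_at[OF a]) (simp add: assms)
  moreover have "G' \<circ> (\<lambda>h. h *\<^sub>R e) = (\<lambda>h. h * G' e)"
    using has_derivative_linear[OF assms] by (auto simp: linear_scale)
  ultimately show ?thesis by (simp add: o_def)
qed

lemma qinv:
  fixes L :: "'a::euclidean_space \<Rightarrow> real"
  assumes U: "open U" and C: "Cinf_on U L" and Z: "\<forall>y\<in>U. dd L y e = 0" and x: "x \<in> U"
  shows "dd (\<lambda>y. dd L y u) x e = 0"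
proof -
  obtain r where r: "r > 0" "ball x r \<subseteq> U" using U x open_contains_ball by blast
  define \<delta> where "\<delta> = r / (2 * (norm e + 1))"
  have \<delta>: "\<delta> > 0" using r unfolding \<delta>_def by (intro divide_pos_pos) (auto simp: add_pos_nonneg, smt (verit) norm_ge_zero)
  have \<delta>e: "\<delta> * norm e < r / 2"
  proof -
    have "\<delta> * norm e = (r/2) * (norm e / (norm e + 1))" by (simp add: \<delta>_def field_simps)
    also have "\<dots> < (r/2) * 1" using r by (intro mult_strict_left_mono) (auto simp: divide_less_eq add_pos_nonneg, smt (verit) norm_ge_zero)
    finally show ?thesis by simp
  qed
  have inball: "z + s *\<^sub>R e \<in> ball x r" if "z \<in> ball x (r/2)" "\<bar>s\<bar> < \<delta>" for z s
  proof -
    have "dist x (z + s *\<^sub>R e) \<le> dist x z + norm (s *\<^sub>R e)"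
      by (metis dist_norm dist_triangle2 norm_minus_commute add_diff_cancel_left')
    also have "norm (s *\<^sub>R e) = \<bar>s\<bar> * norm e" by simp
    also have "\<bar>s\<bar> * norm e \<le> \<delta> * norm e" using that by (intro mult_right_mono) auto
    finally show ?thesis using that \<delta>e by (simp add: dist_commute)
  qed
  have A: "L (z + t *\<^sub>R e) = L z" if z: "z \<in> ball x (r/2)" and t: "\<bar>t\<bar> < \<delta>" for z t
  proof -
    let ?S = "{-\<delta><..<\<delta>}"
    have "\<exists>c. \<forall>s\<in>?S. L (z + s *\<^sub>R e) = c"
    proof (rule has_field_derivative_zero_constant)
      show "convex ?S" by simp
      fix s assume s: "s \<in> ?S"
      then have "\<bar>s\<bar> < \<delta>" by auto
      then have zs: "z + s *\<^sub>R e \<in> U" using inball z r by blast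
      have "((\<lambda>s. L (z + s *\<^sub>R e)) has_derivative (\<lambda>h. h * dd L (z + s *\<^sub>R e) e)) (at s)"
        by (rule line_deriv, rule dd_has, rule C2[OF U C zs])
      then have "((\<lambda>s. L (z + s *\<^sub>R e)) has_field_derivative 0) (at s)"
        using Z zs by (simp add: has_field_derivative_def mult_zero_left[abs_def])
      then show "((\<lambda>s. L (z + s *\<^sub>R e)) has_field_derivative 0) (at s within ?S)"
        by (rule has_field_derivative_at_within)
    qed
    then obtain c where "\<forall>s\<in>?S. L (z + s *\<^sub>R e) = c" by blast
    moreover have "t \<in> ?S" "0 \<in> ?S" using t \<delta> by auto
    ultimately show ?thesis by (metis add.right_neutral scale_zero_left)
  qed
  have B: "dd L (x + t *\<^sub>R e) = dd L x" if t: "\<bar>t\<bar> < \<delta>" for t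
  proof -
    have xb: "x \<in> ball x (r/2)" using r by simp
    have xt: "x + t *\<^sub>R e \<in> U" using inball[OF xb t] r by blast
    have tr: "((\<lambda>z. z + t *\<^sub>R e) has_derivative id) (at x)"
      by (auto intro!: derivative_eq_intros simp: id_def)
    have "(L \<circ> (\<lambda>z. z + t *\<^sub>R e) has_derivative dd L (x + t *\<^sub>R e) \<circ> id) (at x)"
      by (rule diff_chain_at[OF tr]) (simp add: dd_has[OF C2(1)[OF U C xt]])
    then have f: "((\<lambda>z. L (z + t *\<^sub>R e)) has_derivative dd L (x + t *\<^sub>R e)) (at x)"
      by (simp add: o_def)
    have "frechet_derivative (\<lambda>z. L (z + t *\<^sub>R e)) (at x) = frechet_derivative L (at x)"
      by (rule frechet_derivative_transform_within_open[of _ _ "ball x (r/2)"])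
         (use f xb A t in \<open>auto simp: differentiable_def\<close>)
    then show ?thesis using dd_eq[OF f] by (auto simp: fun_eq_iff dd_def)
  qed
  define G where "G = (\<lambda>y. dd L y u)"
  have "((\<lambda>s. G (x + s *\<^sub>R e)) has_derivative (\<lambda>h. h * dd G x e)) (at 0)"
    by (rule line_deriv) (simp add: G_def dd_has[OF C2(2)[OF U C x]])
  then have d1: "((\<lambda>s. G (x + s *\<^sub>R e)) has_field_derivative dd G x e) (at 0)"
    unfolding has_field_derivative_def by (subst (asm) mult.commute) (simp add: mult.commute)
  have d2: "((\<lambda>s. G (x + s *\<^sub>R e)) has_field_derivative 0) (at 0)"
    by (rule has_field_derivative_transform_within_open[of "\<lambda>_. G x" _ _ "ball 0 \<delta>"])
       (use \<delta> B in \<open>auto simp: G_def\<close>)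
  show ?thesis using DERIV_unique[OF d1 d2] by (simp add: G_def)
qed



lemma sumU: "(\<Sum>p\<in>(UNIV::('a::finite\<times>'b::finite) set). f p) = (\<Sum>a\<in>UNIV. \<Sum>b\<in>UNIV. f (a,b))"
  by (simp add: sum.cartesian_product UNIV_Times_UNIV[symmetric] del: UNIV_Times_UNIV)

lemma Lv_fun: "Lv L j b = (\<lambda>y. dd L y (ev j b))" by (simp add: fun_eq_iff Lv_def)

context
  fixes L :: "('n::finite, 'k::finite) pt \<Rightarrow> real" and U x
  assumes U: "open U" and C: "Cinf_on U L" and x: "x \<in> U"
begin

lemma L_has: "(L has_derivative dd L x) (at x)"
  by (rule dd_has, rule C2[OF U C x])

lemma Lv_has: "(Lv L j b has_derivative dd (Lv L j b) x) (at x)"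
  unfolding Lv_fun by (rule dd_has, rule C2(2)[OF U C x])

lemma lin_Lv: "linear (dd (Lv L j b) x)" by (rule has_derivative_linear[OF Lv_has])
lemma lin_L: "linear (dd L x)" by (rule has_derivative_linear[OF L_has])

lemma eta_dd: "dd (\<lambda>y. eta L b y w) x = (\<lambda>h. - (\<Sum>j\<in>UNIV. dd (Lv L j b) x h * qc w $ j))"
proof (rule dd_eq)
  show "((\<lambda>y. eta L b y w) has_derivative (\<lambda>h. - (\<Sum>j\<in>UNIV. dd (Lv L j b) x h * qc w $ j))) (at x)"
    unfolding eta_def
    by (auto intro!: derivative_eq_intros Lv_has)
qed

lemma vcomp_has: "((\<lambda>y. vc y $ a $ j) has_derivative (\<lambda>h. vc h $ a $ j)) (at x)"
  unfolding vc_def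
  by (auto intro!: derivative_eq_intros bounded_linear.has_derivative[OF bounded_linear_vec_nth])

lemma energy_dd: "dd (energy L) x = (\<lambda>h. (\<Sum>a\<in>UNIV. \<Sum>j\<in>UNIV. vc h $ a $ j * Lv L j a x + vc x $ a $ j * dd (Lv L j a) x h) - dd L x h)"
proof (rule dd_eq)
  have e: "energy L = (\<lambda>y. (\<Sum>a\<in>UNIV. \<Sum>j\<in>UNIV. (vc y $ a $ j) * Lv L j a y) - L y)"
    by (simp add: fun_eq_iff energy_def)
  show "(energy L has_derivative (\<lambda>h. (\<Sum>a\<in>UNIV. \<Sum>j\<in>UNIV. vc h $ a $ j * Lv L j a x + vc x $ a $ j * dd (Lv L j a) x h) - dd L x h)) (at x)"
    unfolding e
    by (auto intro!: derivative_eq_intros Lv_has vcomp_has L_has simp: algebra_simps)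
qed

lemma dform_eta: "dform (eta L b) x r w = - (\<Sum>j\<in>UNIV. dd (Lv L j b) x r * qc w $ j) + (\<Sum>j\<in>UNIV. dd (Lv L j b) x w * qc r $ j)"
  unfolding dform_def eta_dd by simp

end


context
  fixes L :: "('n::finite, 'k::finite) pt \<Rightarrow> real" and U x
  assumes U: "open U" and C: "Cinf_on U L" and x: "x \<in> U" and R: "regular_on U L"
begin

definition "WW = ((\<chi> a b. dd (Lv L (fst b) (snd b)) x (ev (fst a) (snd a))) :: real^('n \<times> 'k)^('n \<times> 'k))"

lemma WW_inv: obtains A' where "WW ** A' = mat 1" "A' ** WW = mat 1"
  using R x unfolding regular_on_def invertible_def WW_def by blast

lemma W_inj: "WW *v z = 0 \<Longrightarrow> z = 0"
proof -
  assume h: "WW *v z = 0"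
  obtain A' where "A' ** WW = mat 1" using WW_inv by blast
  then have "z = A' *v (WW *v z)" by (simp add: matrix_vector_mul_assoc)
  then show "z = 0" using h by simp
qed

lemma W_inj': "y v* WW = 0 \<Longrightarrow> y = 0"
proof -
  assume h: "y v* WW = 0"
  obtain A' where "WW ** A' = mat 1" using WW_inv by blast
  then have "y = (y v* WW) v* A'" by (simp add: vector_matrix_mul_assoc)
  moreover have "(0::real^('n \<times> 'k)) v* A' = 0" by (simp add: vec_eq_iff vector_matrix_mult_def)
  ultimately show "y = 0" using h by simp
qed

definition "PR a r = (\<forall>b. eta L b x r = (if a = b then 1 else 0) \<and> (\<forall>w. dform (eta L b) x r w = 0))"

lemma PR_q: assumes "PR a r" shows "qc r = 0"
proof -
  have d: "(\<Sum>j\<in>UNIV. dd (Lv L j b) x (ev l c) * qc r $ j) = 0" for b l c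
  proof -
    have "dform (eta L b) x r (ev l c) = 0" using assms unfolding PR_def by blast
    then show ?thesis by (simp add: dform_eta[OF U C x])
  qed
  have "qc r $ j = 0" for j
  proof -
    define z where "z = (\<chi> p. if snd p = a then qc r $ fst p else 0)"
    have "WW *v z = 0"
      using d[of a] by (simp add: vec_eq_iff matrix_vector_mult_def WW_def z_def sumU if_distrib sum.delta cong: if_cong)
    then have "z = 0" by (rule W_inj)
    then have "z $ (j, a) = 0" by simp
    then show ?thesis by (simp add: z_def)
  qed
  then show ?thesis by (simp add: vec_eq_iff)
qed

lemma PR_D: assumes "PR a r" shows "dd (Lv L j b) x r = 0"
proof -
  have "dform (eta L b) x r (eq j) = 0" using assms unfolding PR_def by blast
  then show ?thesis using PR_q[OF assms]
    by (simp add: dform_eta[OF U C x] axis_nth' if_distrib sum.delta cong: if_cong)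
qed

lemma PR_s: assumes "PR a r" shows "sc r = axis a 1"
proof -
  have "eta L b x r = (if a = b then 1 else 0)" for b using assms unfolding PR_def by blast
  then show ?thesis using PR_q[OF assms] by (auto simp: vec_eq_iff eta_def axis_nth')
qed

lemma PR_uniq: assumes "PR a r1" "PR a r2" shows "r1 = r2"
proof -
  define d where "d = vc r1 - vc r2"
  have D0: "dd (Lv L j b) x (r1 - r2) = 0" for j b
    using PR_D[OF assms(1)] PR_D[OF assms(2)] lin_Lv[OF U C x] by (simp add: linear_diff)
  have "dd (Lv L j b) x (r1 - r2) = (\<Sum>c\<in>UNIV. \<Sum>l\<in>UNIV. d $ c $ l * dd (Lv L j b) x (ev l c))" for j b
  proof -
    have "qc (r1 - r2) = qc r1 - qc r2" "sc (r1 - r2) = sc r1 - sc r2" "vc (r1 - r2) = d"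
      by (simp_all add: qc_def sc_def vc_def d_def)
    then have "qc (r1 - r2) = 0" "sc (r1 - r2) = 0" "vc (r1 - r2) = d"
      by (simp_all add: PR_q[OF assms(1)] PR_q[OF assms(2)] PR_s[OF assms(1)] PR_s[OF assms(2)])
    then show ?thesis by (subst lin_decomp[OF lin_Lv[OF U C x]]) simp
  qed
  then have E: "(\<Sum>c\<in>UNIV. \<Sum>l\<in>UNIV. d $ c $ l * dd (Lv L j b) x (ev l c)) = 0" for j b using D0 by simp
  define y where "y = (\<chi> p. d $ snd p $ fst p)"
  have "y v* WW = 0"
    using E by (simp add: vec_eq_iff vector_matrix_mult_def WW_def y_def sumU sum.swap[of _ "UNIV::'n set"])
  then have "y = 0" by (rule W_inj')
  then have "d = 0" by (simp add: vec_eq_iff y_def)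
  then have "vc r1 = vc r2" by (simp add: d_def)
  then show ?thesis
    using decomp[of r1] decomp[of r2] PR_q[OF assms(1)] PR_q[OF assms(2)] PR_s[OF assms(1)] PR_s[OF assms(2)]
    by metis
qed

lemma PR_ex: "\<exists>r. PR a r"
proof -
  obtain A' where A': "A' ** WW = mat 1" using WW_inv by blast
  define S where "S = (\<chi> p. dd (Lv L (fst p) (snd p)) x (es a))"
  define y where "y = (-S) v* A'"
  have yW: "y v* WW = -S" by (simp add: y_def vector_matrix_mul_assoc A')
  define r :: "('n,'k) pt" where "r = (0, (\<chi> c l. y $ (l,c)), axis a 1)"
  have qr: "qc r = 0" "sc r = axis a 1" "vc r = (\<chi> c l. y $ (l,c))"
    by (simp_all add: r_def qc_def sc_def vc_def)
  have D: "dd (Lv L j b) x r = 0" for j b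
  proof -
    have e1: "(y v* WW) $ (j,b) = (\<Sum>c\<in>UNIV. \<Sum>l\<in>UNIV. y $ (l,c) * dd (Lv L j b) x (ev l c))"
      by (simp add: vector_matrix_mult_def WW_def sumU sum.swap[of _ "UNIV::'n set"])
    have "dd (Lv L j b) x r = (\<Sum>c\<in>UNIV. \<Sum>l\<in>UNIV. y $ (l,c) * dd (Lv L j b) x (ev l c)) + S $ (j,b)"
      by (subst lin_decomp[OF lin_Lv[OF U C x]]) (simp add: qr S_def axis_nth' if_distrib[of "\<lambda>v. v * _"] sum.delta cong: if_cong)
    then show ?thesis using e1 yW by simp
  qed
  have "PR a r" unfolding PR_def
    by (auto simp: D qr dform_eta[OF U C x] eta_def axis_nth')
  then show ?thesis by blast
qed

lemma reeb_PR: "PR a (reeb L a x)"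
proof -
  have "\<exists>!r. PR a r" using PR_ex PR_uniq by blast
  then show ?thesis unfolding reeb_def PR_def[symmetric] by (rule theI')
qed

lemma reeb_E: "dd (energy L) x (reeb L a x) = - Ls L a x"
proof -
  define r where "r = reeb L a x"
  have P: "PR a r" using reeb_PR r_def by simp
  have "dd L x r = (\<Sum>c\<in>UNIV. \<Sum>j\<in>UNIV. vc r $ c $ j * Lv L j c x) + Ls L a x"
    by (subst lin_decomp[OF lin_L[OF U C x]]) (simp add: PR_q[OF P] PR_s[OF P] Lv_def Ls_def axis_nth' if_distrib[of "\<lambda>v. v * _"] sum.delta cong: if_cong)
  then show ?thesis unfolding r_def[symmetric]
    by (simp add: energy_dd[OF U C x] PR_D[OF P] sum.distrib)
qed

end


theorem mainTheorem18:
  fixes L :: "('n::finite, 'k::finite) pt \<Rightarrow> real"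
    and U :: "('n, 'k) pt set"
    and i :: 'n
  assumes "open U"
    and "Cinf_on U L"
    and "regular_on U L"
    and "\<forall>x\<in>U. Lq L i x = 0"
  shows "(\<forall>a. \<forall>x\<in>U. \<forall>w. lie_form (eta L a) (\<lambda>_. eq i) x w = 0)
       \<and> (\<forall>x\<in>U. lie_fun (energy L) (\<lambda>_. eq i) x = 0)
       \<and> (\<forall>X. solves_kcontact U L X \<longrightarrow>
            (\<forall>x\<in>U. (\<Sum>a\<in>UNIV. lie_fun (Lv L i a) (X a) x)
                     = - (\<Sum>a\<in>UNIV. lie_fun (energy L) (reeb L a) x * Lv L i a x)
                  \<and> - (\<Sum>a\<in>UNIV. lie_fun (energy L) (reeb L a) x * Lv L i a x)
                     = (\<Sum>a\<in>UNIV. Ls L a x * Lv L i a x)))"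
  proof -
  have Z: "\<forall>y\<in>U. dd L y (eq i) = 0" using assms(4) by (simp add: Lq_def)
  have q0: "dd (Lv L j a) x (eq i) = 0" if "x \<in> U" for j a x
    unfolding Lv_fun by (rule qinv[OF assms(1,2) Z that])
  have P1: "dd (\<lambda>y. eta L a y w) x (eq i) = 0" if "x \<in> U" for a x w
    by (simp add: eta_dd[OF assms(1,2) that] q0[OF that])
  have E0: "lie_fun (energy L) (\<lambda>_. eq i) x = 0" if "x \<in> U" for x
    using assms(4) that by (simp add: lie_fun_def energy_dd[OF assms(1,2) that] q0[OF that] Lq_def)
  have part1: "\<forall>a. \<forall>x\<in>U. \<forall>w. lie_form (eta L a) (\<lambda>_. eq i) x w = 0"
  proof (intro allI ballI)
    fix a x w assume "x \<in> U"
    have "eta L a x 0 = 0" by (simp add: eta_def)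
    then show "lie_form (eta L a) (\<lambda>_. eq i) x w = 0"
      by (simp add: lie_form_def P1[OF \<open>x \<in> U\<close>] dd_const)
  qed
  have part3: "(\<Sum>a\<in>UNIV. lie_fun (Lv L i a) (X a) x)
                     = - (\<Sum>a\<in>UNIV. lie_fun (energy L) (reeb L a) x * Lv L i a x)
                  \<and> - (\<Sum>a\<in>UNIV. lie_fun (energy L) (reeb L a) x * Lv L i a x)
                     = (\<Sum>a\<in>UNIV. Ls L a x * Lv L i a x)"
    if S: "solves_kcontact U L X" and x: "x \<in> U" for X x
  proof
    have eqn: "(\<Sum>a\<in>UNIV. dform (eta L a) x (X a x) (eq i))
           = dd (energy L) x (eq i) - (\<Sum>a\<in>UNIV. lie_fun (energy L) (reeb L a) x * eta L a x (eq i))"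
      using S x unfolding solves_kcontact_def by blast
    have l: "dform (eta L a) x (X a x) (eq i) = - lie_fun (Lv L i a) (X a) x" for a
      unfolding dform_def using P1[OF x]
      by (simp add: eta_dd[OF assms(1,2) x] lie_fun_def axis_nth' if_distrib[of "\<lambda>v. _ * v"] sum.delta cong: if_cong)
    have r: "eta L a x (eq i) = - Lv L i a x" for a
      by (simp add: eta_def axis_nth' if_distrib[of "\<lambda>v. _ * v"] sum.delta cong: if_cong)
    have "dd (energy L) x (eq i) = 0" using E0[OF x] by (simp add: lie_fun_def)
    then show "(\<Sum>a\<in>UNIV. lie_fun (Lv L i a) (X a) x)
                     = - (\<Sum>a\<in>UNIV. lie_fun (energy L) (reeb L a) x * Lv L i a x)"
      using eqn by (simp add: l r sum_negf)
    show "- (\<Sum>a\<in>UNIV. lie_fun (energy L) (reeb L a) x * Lv L i a x)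
                     = (\<Sum>a\<in>UNIV. Ls L a x * Lv L i a x)"
      by (simp add: lie_fun_def reeb_E[OF assms(1,2) x assms(3)] sum_negf)
  qed
  show ?thesis using part1 E0 part3 by blast
qed

end
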